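(* Let $C\subseteq 2^X$ be a maximum class of VC-dimension $d$ and $D\subseteq C$ a maximum class of VC-dimension $d-1$. Let $Q$ be an incomplete cube for $(C,D)$ with source $s$ and support $\sigma$, and let $x,y\in X$ with $x\notin\sigma$ and $y\in\sigma$. Then: (i) $Q_x$ is an incomplete cube for $(C_x,D_x)$ whose source is $s_x$; (ii) $Q^y$ is an incomplete cube for $(C^y,D^y)$ whose source is $s^y$.
   Context: $X$ is a finite set, $n=|X|$; concepts are identified with characteristic functions, $c|Y$ is restriction and $C|Y=\{c|Y:c\in C\}$. $Y$ is shattered by $C$ if $C|Y=2^Y$; $X(C)$ is the family of shattered sets; VC-dimension is the maximum size of a shattered set; $C$ is maximum if $|C|=\sum_{i=0}^d\binom{n}{i}$, $d$ its VC-dimension. A cube of $2^X$ is $\{T\cup Z:Z\subseteq Y\}$ with $Y\subseteq X$, $T\subseteq X\setminus Y$; $Y=\mathrm{supp}$ is its support and $T$ its tag; a cube of $C$ is a cube contained in $C$. For $x\in X$: $c_x=c|(X\setminus\{x\})$ and $C_x=\{c_x:c\in C\}$ (restriction, a class on $X\setminus\{x\}$); the reduction $C^x$ is the class on $X\setminus\{x\}$ consisting of the tags of all cubes of $C$ with support $\{x\}$ (i.e. of $c\setminus\{x\}$ for all $c$ with $c,c\Delta\{x\}\in C$), and for such $c$, $c^x=c\setminus\{x\}$; the same notation applies to $D$ and to a cube $Q$ (so $Q_x$, $Q^y$, $s_x$, $s^y$). A missed simplex for $(C,D)$ is $\sigma\in X(C)\setminus X(D)$; an incomplete cube for $(C,D)$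 is a cube $Q$ of $C$ whose support is a missed simplex; its source is the unique $c\in Q$ with $c|\mathrm{supp}(Q)\notin D|\mathrm{supp}(Q)$. (Incomplete cubes and sources for $(C_x,D_x)$ and $(C^y,D^y)$ are defined in the same way.) *)

theory Defs
  imports Main
begin

text \<open>Concepts are subsets of the finite domain X (identified with their characteristic functions).\<close>

definition restrict_class :: "'a set set \<Rightarrow> 'a set \<Rightarrow> 'a set set" where
  "restrict_class C Y = (\<lambda>c. c \<inter> Y) ` C"

definition shatters :: "'a set set \<Rightarrow> 'a set \<Rightarrow> bool" where
  "shatters C Y \<longleftrightarrow> restrict_class C Y = Pow Y"

text \<open>VC-dimension k (an integer, -1 for the empty class, where no set is shattered).\<close>
definition has_vc_dim :: "'a set \<Rightarrow> 'a set set \<Rightarrow> int \<Rightarrow> bool" where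
  "has_vc_dim X C k \<longleftrightarrow> k \<ge> -1
     \<and> (\<forall>Y. Y \<subseteq> X \<and> shatters C Y \<longrightarrow> int (card Y) \<le> k)
     \<and> (k \<ge> 0 \<longrightarrow> (\<exists>Y. Y \<subseteq> X \<and> shatters C Y \<and> int (card Y) = k))"

definition maximum_class :: "'a set \<Rightarrow> 'a set set \<Rightarrow> int \<Rightarrow> bool" where
  "maximum_class X C k \<longleftrightarrow> C \<subseteq> Pow X \<and> has_vc_dim X C k
     \<and> card C = (\<Sum>i\<in>{0..k}. card X choose nat i)"

definition cube_with :: "'a set \<Rightarrow> 'a set set \<Rightarrow> 'a set \<Rightarrow> 'a set \<Rightarrow> bool" where
  "cube_with X Q \<sigma> T \<longleftrightarrow> \<sigma> \<subseteq> X \<and> T \<subseteq> X - \<sigma> \<and> Q = {T \<union> Z | Z. Z \<subseteq> \<sigma>}"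

definition is_cube :: "'a set \<Rightarrow> 'a set set \<Rightarrow> 'a set \<Rightarrow> bool" where
  "is_cube X Q \<sigma> \<longleftrightarrow> (\<exists>T. cube_with X Q \<sigma> T)"

text \<open>Q is an incomplete cube for (C,D) (over domain X) with support sigma:
  a cube of C whose support is a missed simplex.\<close>
definition incomplete_cube :: "'a set \<Rightarrow> 'a set set \<Rightarrow> 'a set set \<Rightarrow> 'a set set \<Rightarrow> 'a set \<Rightarrow> bool" where
  "incomplete_cube X C D Q \<sigma> \<longleftrightarrow> is_cube X Q \<sigma> \<and> Q \<subseteq> C \<and> shatters C \<sigma> \<and> \<not> shatters D \<sigma>"

definition is_source :: "'a set set \<Rightarrow> 'a set set \<Rightarrow> 'a set \<Rightarrow> 'a set \<Rightarrow> bool" where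
  "is_source D Q \<sigma> s \<longleftrightarrow> s \<in> Q \<and> s \<inter> \<sigma> \<notin> restrict_class D \<sigma>
     \<and> (\<forall>c\<in>Q. c \<inter> \<sigma> \<notin> restrict_class D \<sigma> \<longrightarrow> c = s)"

definition del_class :: "'a set set \<Rightarrow> 'a \<Rightarrow> 'a set set" where
  "del_class C x = (\<lambda>c. c - {x}) ` C"

definition reduction :: "'a set set \<Rightarrow> 'a \<Rightarrow> 'a set set" where
  "reduction C x = {c - {x} | c. c \<in> C \<and> (c - {x}) \<union> ({x} - c) \<in> C}"

end

theory Submission
  imports Defs
begin


definition Phi :: "int \<Rightarrow> nat \<Rightarrow> nat" where
  "Phi k n = (\<Sum>i\<in>{0..k}. n choose nat i)"

lemma Phi_nat: "Phi (int m) n = (\<Sum>i\<le>m. n choose i)"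
proof -
  have "{0..int m} = int ` {0..m}" by (simp add: image_int_atLeastAtMost)
  then show ?thesis unfolding Phi_def by (simp add: sum.reindex atLeast0AtMost)
qed

lemma Phi_neg: "k < 0 \<Longrightarrow> Phi k n = 0"
  unfolding Phi_def by simp

lemma S0: "(\<Sum>i\<le>m. (0::nat) choose i) = 1"
  by (induction m) auto

lemma Phi_0: assumes "0 \<le> k" shows "Phi k 0 = 1"
proof -
  obtain m where "k = int m" using assms nonneg_int_cases by blast
  then show ?thesis by (simp only: Phi_nat S0)
qed

lemma S_pascal: "(\<Sum>i\<le>Suc m. Suc n choose i) = (\<Sum>i\<le>Suc m. n choose i) + (\<Sum>i\<le>m. n choose i)"
  by (induction m) auto

lemma Phi_pascal: "Phi k (Suc n) = Phi k n + Phi (k - 1) n"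
proof (cases "k < 0")
  case True then show ?thesis by (simp add: Phi_neg)
next
  case False
  then obtain m where m: "k = int m" by (metis nonneg_int_cases not_less)
  show ?thesis
  proof (cases m)
    case 0 then show ?thesis using m by (simp add: Phi_def)
  next
    case (Suc m')
    have km: "k - 1 = int m'" using m Suc by simp
    have e1: "Phi k (Suc n) = (\<Sum>i\<le>Suc m'. Suc n choose i)" "Phi k n = (\<Sum>i\<le>Suc m'. n choose i)"
      by (simp only: m Suc Phi_nat)+
    have e2: "Phi (k - 1) n = (\<Sum>i\<le>m'. n choose i)" by (simp only: km Phi_nat)
    show ?thesis by (simp only: e1 e2 S_pascal)
  qed
qed

lemma shatters_iff: "shatters C Y \<longleftrightarrow> (\<forall>P\<subseteq>Y. \<exists>c\<in>C. c \<inter> Y = P)"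
proof -
  have sub: "(\<lambda>c. c \<inter> Y) ` C \<subseteq> Pow Y" by blast
  have "shatters C Y \<longleftrightarrow> Pow Y \<subseteq> (\<lambda>c. c \<inter> Y) ` C"
    unfolding shatters_def restrict_class_def using sub by (metis subset_antisym order_refl)
  also have "\<dots> \<longleftrightarrow> (\<forall>P\<subseteq>Y. \<exists>c\<in>C. c \<inter> Y = P)"
  proof
    assume h: "Pow Y \<subseteq> (\<lambda>c. c \<inter> Y) ` C"
    show "\<forall>P\<subseteq>Y. \<exists>c\<in>C. c \<inter> Y = P"
    proof (intro allI impI)
      fix P assume "P \<subseteq> Y"
      then have "P \<in> (\<lambda>c. c \<inter> Y) ` C" using h by blast
      then obtain c where "c \<in> C" "P = c \<inter> Y" by (rule imageE)
      then show "\<exists>c\<in>C. c \<inter> Y = P" by blast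
    qed
  next
    assume h: "\<forall>P\<subseteq>Y. \<exists>c\<in>C. c \<inter> Y = P"
    show "Pow Y \<subseteq> (\<lambda>c. c \<inter> Y) ` C"
    proof
      fix P assume "P \<in> Pow Y"
      then obtain c where "c \<in> C" "c \<inter> Y = P" using h by blast
      then show "P \<in> (\<lambda>c. c \<inter> Y) ` C" by blast
    qed
  qed
  finally show ?thesis .
qed

lemma red_mem: "z \<in> reduction C x \<longleftrightarrow> x \<notin> z \<and> z \<in> C \<and> insert x z \<in> C"
proof
  assume "z \<in> reduction C x"
  then obtain c where c: "z = c - {x}" "c \<in> C" "(c - {x}) \<union> ({x} - c) \<in> C"
    unfolding reduction_def by blast
  show "x \<notin> z \<and> z \<in> C \<and> insert x z \<in> C"
  proof (cases "x \<in> c")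
    case True
    then have "insert x z = c" "(c - {x}) \<union> ({x} - c) = z" using c by auto
    then show ?thesis using c by auto
  next
    case False
    then have "z = c" "(c - {x}) \<union> ({x} - c) = insert x z" using c by auto
    then show ?thesis using c by auto
  qed
next
  assume a: "x \<notin> z \<and> z \<in> C \<and> insert x z \<in> C"
  then have e1: "(z - {x}) \<union> ({x} - z) = insert x z" and e2: "z - {x} = z" by auto
  have "z - {x} = z - {x} \<and> z \<in> C \<and> (z - {x}) \<union> ({x} - z) \<in> C" using a e1 by simp
  then have "\<exists>c. z - {x} = c - {x} \<and> c \<in> C \<and> (c - {x}) \<union> ({x} - c) \<in> C" by blast
  then show "z \<in> reduction C x" unfolding reduction_def e2 by simp
qed

lemma card_split:
  assumes "finite C"
  shows "card C = card (del_class C x) + card (reduction C x)"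
proof -
  define C1 where "C1 = {c\<in>C. x \<notin> c}"
  define C2 where "C2 = {c\<in>C. x \<in> c}"
  have fin: "finite C1" "finite C2" using assms C1_def C2_def by auto
  have dis: "C1 \<inter> C2 = {}" "C = C1 \<union> C2" unfolding C1_def C2_def by auto
  have inj1: "inj_on (\<lambda>c. c - {x}) C1" unfolding C1_def inj_on_def by auto
  have inj2: "inj_on (\<lambda>c. c - {x}) C2" unfolding C2_def inj_on_def by auto
  have u: "del_class C x = (\<lambda>c. c - {x}) ` C1 \<union> (\<lambda>c. c - {x}) ` C2"
    unfolding del_class_def using dis by auto
  have i: "reduction C x = (\<lambda>c. c - {x}) ` C1 \<inter> (\<lambda>c. c - {x}) ` C2"
  proof
    show "reduction C x \<subseteq> (\<lambda>c. c - {x}) ` C1 \<inter> (\<lambda>c. c - {x}) ` C2"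
    proof
      fix z assume "z \<in> reduction C x"
      then have z: "x \<notin> z" "z \<in> C" "insert x z \<in> C" by (simp_all add: red_mem)
      have "z \<in> (\<lambda>c. c - {x}) ` C1" using z unfolding C1_def by (intro image_eqI[of _ _ z]) auto
      moreover have "z \<in> (\<lambda>c. c - {x}) ` C2" using z unfolding C2_def by (intro image_eqI[of _ _ "insert x z"]) auto
      ultimately show "z \<in> (\<lambda>c. c - {x}) ` C1 \<inter> (\<lambda>c. c - {x}) ` C2" by blast
    qed
  next
    show "(\<lambda>c. c - {x}) ` C1 \<inter> (\<lambda>c. c - {x}) ` C2 \<subseteq> reduction C x"
    proof
      fix z assume "z \<in> (\<lambda>c. c - {x}) ` C1 \<inter> (\<lambda>c. c - {x}) ` C2"
      then obtain a b where ab: "a \<in> C1" "b \<in> C2" "z = a - {x}" "z = b - {x}" by blast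
      then have "a = z" "b = insert x z" unfolding C1_def C2_def by auto
      then show "z \<in> reduction C x" using ab red_mem[of z C x] unfolding C1_def C2_def by auto
    qed
  qed
  have "card (del_class C x) + card (reduction C x) = card ((\<lambda>c. c - {x}) ` C1) + card ((\<lambda>c. c - {x}) ` C2)"
    unfolding u i using fin card_Un_Int[of "(\<lambda>c. c - {x}) ` C1" "(\<lambda>c. c - {x}) ` C2"] by auto
  also have "\<dots> = card C1 + card C2" using inj1 inj2 by (simp add: card_image)
  also have "\<dots> = card C" using dis fin by (simp add: card_Un_disjoint)
  finally show ?thesis by simp
qed

lemma restrict_del: assumes "x \<notin> Y" shows "restrict_class (del_class C x) Y = restrict_class C Y"
proof -
  have e: "\<And>c. (c - {x}) \<inter> Y = c \<inter> Y" using assms by blast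
  show ?thesis unfolding restrict_class_def del_class_def image_image e ..
qed

lemma shatters_del: "x \<notin> Y \<Longrightarrow> shatters (del_class C x) Y \<longleftrightarrow> shatters C Y"
  unfolding shatters_def by (simp add: restrict_del)

lemma shatters_red: assumes "x \<notin> Y" "shatters (reduction C x) Y" shows "shatters C (insert x Y)"
  unfolding shatters_iff
proof (intro allI impI)
  fix P assume P: "P \<subseteq> insert x Y"
  then have "P - {x} \<subseteq> Y" by auto
  then obtain z where z: "z \<in> reduction C x" "z \<inter> Y = P - {x}" using assms(2) unfolding shatters_iff by blast
  then have z2: "x \<notin> z" "z \<in> C" "insert x z \<in> C" by (simp_all add: red_mem)
  show "\<exists>c\<in>C. c \<inter> insert x Y = P"
  proof (cases "x \<in> P")
    case True
    then have "insert x z \<inter> insert x Y = P" using z z2 P by auto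
    then show ?thesis using z2 by blast
  next
    case False
    then have "z \<inter> insert x Y = P" using z z2 P by auto
    then show ?thesis using z2 by blast
  qed
qed

lemma sauer:
  assumes "finite X" "C \<subseteq> Pow X" "\<forall>Y\<subseteq>X. shatters C Y \<longrightarrow> int (card Y) \<le> k"
  shows "card C \<le> Phi k (card X)"
  using assms
proof (induction X arbitrary: C k rule: finite_induct)
  case empty
  show ?case
  proof (cases "C = {}")
    case True then show ?thesis by simp
  next
    case False
    then have "shatters C {}" unfolding shatters_iff by auto
    then have "0 \<le> k" using empty by auto
    moreover have "C \<subseteq> {{}}" using empty by auto
    then have "card C \<le> card {{}::'a set}" by (intro card_mono) auto
    then have "card C \<le> 1" by simp
    ultimately show ?thesis by (simp add: Phi_0)
  qed
next
  case (insert x X)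
  have finC: "finite C" using insert(1,4) by (meson finite_Pow_iff finite_insert rev_finite_subset)
  have d1: "del_class C x \<subseteq> Pow X" using insert(4) unfolding del_class_def by auto
  have r1: "reduction C x \<subseteq> Pow X"
  proof
    fix z assume "z \<in> reduction C x"
    then have "x \<notin> z" "z \<in> C" by (simp_all add: red_mem)
    then show "z \<in> Pow X" using insert(4) by blast
  qed
  have "card (del_class C x) \<le> Phi k (card X)"
  proof (rule insert.IH[OF d1], intro allI impI)
    fix Y assume "Y \<subseteq> X" "shatters (del_class C x) Y"
    then show "int (card Y) \<le> k" using insert(2,5) shatters_del[of x Y C] by auto
  qed
  moreover have "card (reduction C x) \<le> Phi (k-1) (card X)"
  proof (rule insert.IH[OF r1], intro allI impI)
    fix Y assume Y: "Y \<subseteq> X" "shatters (reduction C x) Y"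
    then have "x \<notin> Y" using insert(2) by auto
    then have "shatters C (insert x Y)" using shatters_red Y by metis
    moreover have "insert x Y \<subseteq> insert x X" using Y by auto
    ultimately have "int (card (insert x Y)) \<le> k" using insert(5) by blast
    moreover have "finite Y" using Y insert(1) finite_subset by auto
    ultimately show "int (card Y) \<le> k - 1" using \<open>x \<notin> Y\<close> by simp
  qed
  ultimately show ?case using card_split[OF finC, of x] insert(1,2) by (simp add: Phi_pascal)
qed

definition maxc :: "'a set \<Rightarrow> 'a set set \<Rightarrow> int \<Rightarrow> bool" where
  "maxc X C k \<longleftrightarrow> finite X \<and> C \<subseteq> Pow X \<and> (\<forall>Y\<subseteq>X. shatters C Y \<longrightarrow> int (card Y) \<le> k)
     \<and> card C = Phi k (card X)"

lemma maxc_step: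
  assumes "maxc X C k" "x \<in> X"
  shows "maxc (X - {x}) (del_class C x) k \<and> maxc (X - {x}) (reduction C x) (k - 1)"
proof -
  have fX: "finite X" and CX: "C \<subseteq> Pow X" and vc: "\<forall>Y\<subseteq>X. shatters C Y \<longrightarrow> int (card Y) \<le> k"
    and cC: "card C = Phi k (card X)" using assms unfolding maxc_def by auto
  have finC: "finite C" using fX CX by (meson finite_Pow_iff rev_finite_subset)
  have d1: "del_class C x \<subseteq> Pow (X - {x})" using CX unfolding del_class_def by auto
  have r1: "reduction C x \<subseteq> Pow (X - {x})" using CX by (auto simp: red_mem)
  have vd: "\<forall>Y\<subseteq>X - {x}. shatters (del_class C x) Y \<longrightarrow> int (card Y) \<le> k"
  proof (intro allI impI)
    fix Y assume Y: "Y \<subseteq> X - {x}" "shatters (del_class C x) Y"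
    then have "x \<notin> Y" by auto
    then have "shatters C Y" using Y shatters_del by metis
    then show "int (card Y) \<le> k" using vc Y by auto
  qed
  have vr: "\<forall>Y\<subseteq>X - {x}. shatters (reduction C x) Y \<longrightarrow> int (card Y) \<le> k - 1"
  proof (intro allI impI)
    fix Y assume Y: "Y \<subseteq> X - {x}" "shatters (reduction C x) Y"
    then have "x \<notin> Y" by auto
    then have "shatters C (insert x Y)" using shatters_red Y by metis
    moreover have "insert x Y \<subseteq> X" using Y assms(2) by auto
    ultimately have "int (card (insert x Y)) \<le> k" using vc by blast
    moreover have "finite Y" using Y fX finite_subset by blast
    ultimately show "int (card Y) \<le> k - 1" using \<open>x \<notin> Y\<close> by simp
  qed
  have fX': "finite (X - {x})" using fX by simp
  have a: "card (del_class C x) \<le> Phi k (card (X - {x}))" using sauer[OF fX' d1 vd] .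
  have b: "card (reduction C x) \<le> Phi (k - 1) (card (X - {x}))" using sauer[OF fX' r1 vr] .
  have cX: "card X = Suc (card (X - {x}))" using assms(2) fX by (metis card_Suc_Diff1)
  have "card C = Phi k (card (X - {x})) + Phi (k - 1) (card (X - {x}))"
    using cC cX Phi_pascal by simp
  then have "card (del_class C x) = Phi k (card (X - {x}))" "card (reduction C x) = Phi (k - 1) (card (X - {x}))"
    using a b card_split[OF finC, of x] by linarith+
  then show ?thesis unfolding maxc_def using fX' d1 r1 vd vr by auto
qed

lemma restrict_id: assumes "C \<subseteq> Pow X" shows "restrict_class C X = C"
proof -
  have "\<And>c. c \<in> C \<Longrightarrow> c \<inter> X = c" using assms by blast
  then have "(\<lambda>c. c \<inter> X) ` C = (\<lambda>c. c) ` C" by (rule image_cong[OF refl])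
  then show ?thesis unfolding restrict_class_def by simp
qed

lemma restrict_step: "restrict_class C (Z - {w}) = del_class (restrict_class C Z) w"
proof -
  have e: "\<And>c. c \<inter> Z - {w} = c \<inter> (Z - {w})" by blast
  show ?thesis unfolding restrict_class_def del_class_def image_image e ..
qed

lemma maxc_restrict_aux:
  assumes "finite W" "maxc X C k" "W \<subseteq> X"
  shows "maxc (X - W) (restrict_class C (X - W)) k"
  using assms
proof (induction W rule: finite_induct)
  case empty
  then show ?case using restrict_id unfolding maxc_def by (metis Diff_empty)
next
  case (insert w W)
  have "maxc (X - W) (restrict_class C (X - W)) k" using insert by auto
  moreover have "w \<in> X - W" using insert by auto
  ultimately have "maxc (X - W - {w}) (del_class (restrict_class C (X - W)) w) k" by (rule maxc_step[THEN conjunct1])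
  moreover have "X - insert w W = X - W - {w}" by auto
  ultimately show ?case using restrict_step by metis
qed

lemma maxc_restrict:
  assumes "maxc X C k" "Y \<subseteq> X"
  shows "maxc Y (restrict_class C Y) k"
proof -
  have "finite X" using assms unfolding maxc_def by auto
  then have "maxc (X - (X - Y)) (restrict_class C (X - (X - Y))) k"
    using maxc_restrict_aux[of "X - Y"] assms by auto
  moreover have "X - (X - Y) = Y" using assms by auto
  ultimately show ?thesis by simp
qed

theorem lemma5p4:
  fixes X :: "'a set" and C D Q :: "'a set set" and \<sigma> s :: "'a set" and x y :: 'a and d :: nat
  assumes "finite X"
    and "C \<subseteq> Pow X"
    and "maximum_class X C (int d)"
    and "D \<subseteq> C"
    and "maximum_class X D (int d - 1)"
    and "incomplete_cube X C D Q \<sigma>"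
    and "is_source D Q \<sigma> s"
    and "x \<in> X" and "x \<notin> \<sigma>"
    and "y \<in> X" and "y \<in> \<sigma>"
  shows "(incomplete_cube (X - {x}) (del_class C x) (del_class D x) (del_class Q x) \<sigma>
           \<and> is_source (del_class D x) (del_class Q x) \<sigma> (s - {x}))
       \<and> (incomplete_cube (X - {y}) (reduction C y) (reduction D y) (reduction Q y) (\<sigma> - {y})
           \<and> is_source (reduction D y) (reduction Q y) (\<sigma> - {y}) (s - {y}))"
proof -
  obtain T where T: "\<sigma> \<subseteq> X" "T \<subseteq> X - \<sigma>" "Q = {T \<union> Z | Z. Z \<subseteq> \<sigma>}"
    using assms(6) unfolding incomplete_cube_def is_cube_def cube_with_def by blast
  have QC: "Q \<subseteq> C" and shC: "shatters C \<sigma>" and nshD: "\<not> shatters D \<sigma>"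
    using assms(6) unfolding incomplete_cube_def by auto
  have sQ: "s \<in> Q" and sD: "s \<inter> \<sigma> \<notin> restrict_class D \<sigma>"
    and suniq: "\<And>c. c \<in> Q \<Longrightarrow> c \<inter> \<sigma> \<notin> restrict_class D \<sigma> \<Longrightarrow> c = s"
    using assms(7) unfolding is_source_def by auto
  have Tcap: "T \<inter> \<sigma> = {}" using T(2) by auto
  have Qmem: "\<And>Z. Z \<subseteq> \<sigma> \<Longrightarrow> T \<union> Z \<in> Q" unfolding T(3) by blast
  have Qelim: "\<And>c. c \<in> Q \<Longrightarrow> \<exists>Z. Z \<subseteq> \<sigma> \<and> c = T \<union> Z" unfolding T(3) by blast
  have part1: "incomplete_cube (X - {x}) (del_class C x) (del_class D x) (del_class Q x) \<sigma>
           \<and> is_source (del_class D x) (del_class Q x) \<sigma> (s - {x})"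
  proof -
    have dQ: "del_class Q x = {(T - {x}) \<union> Z | Z. Z \<subseteq> \<sigma>}"
    proof
      show "del_class Q x \<subseteq> {(T - {x}) \<union> Z | Z. Z \<subseteq> \<sigma>}"
      proof
        fix w assume "w \<in> del_class Q x"
        then obtain c where c: "c \<in> Q" "w = c - {x}" unfolding del_class_def by blast
        then obtain Z where Z: "Z \<subseteq> \<sigma>" "w = (T \<union> Z) - {x}" using Qelim by blast
        then have "w = (T - {x}) \<union> Z" using assms(9) by auto
        then show "w \<in> {(T - {x}) \<union> Z | Z. Z \<subseteq> \<sigma>}" using Z(1) by blast
      qed
    next
      show "{(T - {x}) \<union> Z | Z. Z \<subseteq> \<sigma>} \<subseteq> del_class Q x"
      proof
        fix w assume "w \<in> {(T - {x}) \<union> Z | Z. Z \<subseteq> \<sigma>}"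
        then obtain Z where Z: "Z \<subseteq> \<sigma>" "w = (T - {x}) \<union> Z" by blast
        then have "w = (T \<union> Z) - {x}" "T \<union> Z \<in> Q" using assms(9) Qmem by auto
        then show "w \<in> del_class Q x" unfolding del_class_def by blast
      qed
    qed
    have cube: "is_cube (X - {x}) (del_class Q x) \<sigma>"
      unfolding is_cube_def cube_with_def
      by (rule exI[of _ "T - {x}"]) (use T(1,2) assms(9) dQ in blast)
    have sub: "del_class Q x \<subseteq> del_class C x" using QC unfolding del_class_def by auto
    have rD: "restrict_class (del_class D x) \<sigma> = restrict_class D \<sigma>" using restrict_del assms(9) by metis
    have src: "is_source (del_class D x) (del_class Q x) \<sigma> (s - {x})"
      unfolding is_source_def rD
    proof (intro conjI ballI impI)
      show "s - {x} \<in> del_class Q x" using sQ unfolding del_class_def by auto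
      have "(s - {x}) \<inter> \<sigma> = s \<inter> \<sigma>" using assms(9) by auto
      then show "(s - {x}) \<inter> \<sigma> \<notin> restrict_class D \<sigma>" using sD by simp
    next
      fix c' assume c': "c' \<in> del_class Q x" "c' \<inter> \<sigma> \<notin> restrict_class D \<sigma>"
      then obtain c where c: "c \<in> Q" "c' = c - {x}" unfolding del_class_def by auto
      have "c' \<inter> \<sigma> = c \<inter> \<sigma>" using c assms(9) by auto
      then show "c' = s - {x}" using suniq c c' by auto
    qed
    have sh1: "shatters (del_class C x) \<sigma>" using shatters_del[OF assms(9)] shC by simp
    have sh2: "\<not> shatters (del_class D x) \<sigma>" using shatters_del[OF assms(9)] nshD by simp
    show ?thesis unfolding incomplete_cube_def
      by (simp only: cube sub sh1 sh2 src simp_thms)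
  qed
  define \<sigma>' where "\<sigma>' = \<sigma> - {y}"
  have redQ: "reduction Q y = {T \<union> Z | Z. Z \<subseteq> \<sigma>'}"
  proof
    show "reduction Q y \<subseteq> {T \<union> Z | Z. Z \<subseteq> \<sigma>'}"
    proof
      fix z assume "z \<in> reduction Q y"
      then have z: "y \<notin> z" "z \<in> Q" by (simp_all add: red_mem)
      then obtain Z where Z: "Z \<subseteq> \<sigma>" "z = T \<union> Z" using Qelim by blast
      then have "Z \<subseteq> \<sigma>'" using z \<sigma>'_def by auto
      then show "z \<in> {T \<union> Z | Z. Z \<subseteq> \<sigma>'}" using Z(2) by blast
    qed
  next
    show "{T \<union> Z | Z. Z \<subseteq> \<sigma>'} \<subseteq> reduction Q y"
    proof
      fix z assume "z \<in> {T \<union> Z | Z. Z \<subseteq> \<sigma>'}"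
      then obtain Z where Z: "Z \<subseteq> \<sigma>'" "z = T \<union> Z" by blast
      have "y \<notin> z" using Z Tcap assms(11) \<sigma>'_def by auto
      moreover have "z \<in> Q" using Z Qmem \<sigma>'_def by auto
      moreover have "insert y z = T \<union> insert y Z" using Z by auto
      moreover have "insert y Z \<subseteq> \<sigma>" using Z \<sigma>'_def assms(11) by auto
      then have "T \<union> insert y Z \<in> Q" using Qmem by blast
      ultimately have "y \<notin> z" "z \<in> Q" "insert y z \<in> Q" by simp_all
      then show "z \<in> reduction Q y" by (simp add: red_mem)
    qed
  qed
  have part2: "incomplete_cube (X - {y}) (reduction C y) (reduction D y) (reduction Q y) \<sigma>'
           \<and> is_source (reduction D y) (reduction Q y) \<sigma>' (s - {y})"
  proof -
    have cube: "is_cube (X - {y}) (reduction Q y) \<sigma>'"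
      unfolding is_cube_def cube_with_def redQ
      by (rule exI[of _ T]) (use T(1,2) assms(11) \<sigma>'_def in auto)
    have sub: "reduction Q y \<subseteq> reduction C y"
    proof
      fix z assume "z \<in> reduction Q y"
      then have "y \<notin> z" "z \<in> Q" "insert y z \<in> Q" by (simp_all add: red_mem)
      then have "y \<notin> z" "z \<in> C" "insert y z \<in> C" using QC by blast+
      then show "z \<in> reduction C y" by (simp add: red_mem)
    qed
    have shr: "shatters (reduction C y) \<sigma>'"
      unfolding shatters_iff
    proof (intro allI impI)
      fix P assume "P \<subseteq> \<sigma>'"
      then have "T \<union> P \<in> reduction Q y" unfolding redQ by blast
      then have "T \<union> P \<in> reduction C y" using sub by blast
      moreover have "(T \<union> P) \<inter> \<sigma>' = P" using \<open>P \<subseteq> \<sigma>'\<close> Tcap \<sigma>'_def by auto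
      ultimately have "T \<union> P \<in> reduction C y" "(T \<union> P) \<inter> \<sigma>' = P" by auto
      then show "\<exists>c\<in>reduction C y. c \<inter> \<sigma>' = P" by blast
    qed
    have nshr: "\<not> shatters (reduction D y) \<sigma>'"
    proof
      assume "shatters (reduction D y) \<sigma>'"
      then have "shatters D (insert y \<sigma>')" using shatters_red \<sigma>'_def by (metis Diff_iff singletonI)
      moreover have "insert y \<sigma>' = \<sigma>" using \<sigma>'_def assms(11) by auto
      ultimately show False using nshD by simp
    qed
    have mD: "maxc X D (int d - 1)" using assms(1,5) unfolding maximum_class_def has_vc_dim_def maxc_def
      by (simp add: Phi_def)
    have sfin: "finite \<sigma>" using T(1) assms(1) finite_subset by blast
    have m1: "maxc \<sigma>' (restrict_class (reduction D y) \<sigma>') (int d - 1 - 1)"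
    proof -
      have "\<sigma>' \<subseteq> X - {y}" using T(1) \<sigma>'_def by auto
      then show ?thesis using maxc_restrict[OF conjunct2[OF maxc_step[OF mD assms(10)]]] by blast
    qed
    have m2: "maxc \<sigma>' (reduction (restrict_class D \<sigma>) y) (int d - 1 - 1)"
      using conjunct2[OF maxc_step[OF maxc_restrict[OF mD T(1)] assms(11)]] \<sigma>'_def by simp
    have incl: "restrict_class (reduction D y) \<sigma>' \<subseteq> reduction (restrict_class D \<sigma>) y"
    proof
      fix w assume "w \<in> restrict_class (reduction D y) \<sigma>'"
      then obtain e where e: "e \<in> reduction D y" "w = e \<inter> \<sigma>'" unfolding restrict_class_def by auto
      then have e2: "y \<notin> e" "e \<in> D" "insert y e \<in> D" by (simp_all add: red_mem)
      have "w = e \<inter> \<sigma>" using e e2 \<sigma>'_def by auto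
      moreover have "insert y w = insert y e \<inter> \<sigma>" using e e2 \<sigma>'_def assms(11) by auto
      moreover have "y \<notin> w" using e \<sigma>'_def by auto
      moreover have "e \<inter> \<sigma> \<in> restrict_class D \<sigma>" "insert y e \<inter> \<sigma> \<in> restrict_class D \<sigma>"
        using e2 unfolding restrict_class_def by blast+
      ultimately show "w \<in> reduction (restrict_class D \<sigma>) y" by (simp add: red_mem)
    qed
    have keq: "restrict_class (reduction D y) \<sigma>' = reduction (restrict_class D \<sigma>) y"
    proof (rule card_subset_eq)
      show "finite (reduction (restrict_class D \<sigma>) y)" using m2 unfolding maxc_def
        by (meson finite_Pow_iff rev_finite_subset)
      show "card (restrict_class (reduction D y) \<sigma>') = card (reduction (restrict_class D \<sigma>) y)"
        using m1 m2 unfolding maxc_def by simp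
    qed (rule incl)
    have src: "is_source (reduction D y) (reduction Q y) \<sigma>' (s - {y})"
      unfolding is_source_def keq
    proof (intro conjI ballI impI)
      obtain Z where Z: "Z \<subseteq> \<sigma>" "s = T \<union> Z" using sQ Qelim by blast
      then have "s - {y} = T \<union> (Z - {y})" using Tcap assms(11) by auto
      moreover have "Z - {y} \<subseteq> \<sigma>'" using Z \<sigma>'_def by auto
      ultimately show "s - {y} \<in> reduction Q y" unfolding redQ by blast
      show "(s - {y}) \<inter> \<sigma>' \<notin> reduction (restrict_class D \<sigma>) y"
      proof
        assume "(s - {y}) \<inter> \<sigma>' \<in> reduction (restrict_class D \<sigma>) y"
        then have A: "(s - {y}) \<inter> \<sigma>' \<in> restrict_class D \<sigma>" and B: "insert y ((s - {y}) \<inter> \<sigma>') \<in> restrict_class D \<sigma>"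
          by (simp_all add: red_mem)
        have "s \<inter> \<sigma> = (s - {y}) \<inter> \<sigma>' \<or> s \<inter> \<sigma> = insert y ((s - {y}) \<inter> \<sigma>')"
          using \<sigma>'_def assms(11) by auto
        then show False
        proof
          assume "s \<inter> \<sigma> = (s - {y}) \<inter> \<sigma>'"
          then show False using A sD by simp
        next
          assume "s \<inter> \<sigma> = insert y ((s - {y}) \<inter> \<sigma>')"
          then show False using B sD by simp
        qed
      qed
    next
      fix c' assume c': "c' \<in> reduction Q y" "c' \<inter> \<sigma>' \<notin> reduction (restrict_class D \<sigma>) y"
      then obtain Z where Z: "Z \<subseteq> \<sigma>'" "c' = T \<union> Z" unfolding redQ by blast
      have cZ: "c' \<inter> \<sigma>' = Z" using Z Tcap \<sigma>'_def by auto
      have yZ: "y \<notin> Z" using Z \<sigma>'_def by auto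
      have "Z \<subseteq> \<sigma>" "insert y Z \<subseteq> \<sigma>" using Z \<sigma>'_def assms(11) by auto
      then have q1: "T \<union> Z \<in> Q" and q2: "T \<union> insert y Z \<in> Q" using Qmem by blast+
      have i1: "(T \<union> Z) \<inter> \<sigma> = Z" and i2: "(T \<union> insert y Z) \<inter> \<sigma> = insert y Z"
        using Z Tcap \<sigma>'_def assms(11) by auto
      have "Z \<notin> restrict_class D \<sigma> \<or> insert y Z \<notin> restrict_class D \<sigma>"
        using c'(2) cZ yZ by (simp add: red_mem)
      then have "T \<union> Z = s \<or> T \<union> insert y Z = s" using suniq[OF q1] suniq[OF q2] i1 i2 by auto
      moreover have "(T \<union> Z) - {y} = T \<union> Z" "(T \<union> insert y Z) - {y} = T \<union> Z"
        using yZ Tcap assms(11) by auto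
      ultimately show "c' = s - {y}" using Z(2) by auto
    qed
    show ?thesis unfolding incomplete_cube_def by (simp only: cube sub shr nshr src simp_thms)
  qed
  show ?thesis using part1 part2 \<sigma>'_def by simp
qed




end
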